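(* Let $r>0$, $0<p<1$, $q=1-p$, and let $X\sim\mathcal{UNB}(r,p)$ with probability mass function $$p(x)=\frac{q^{x}p^{r}}{1+x}\binom{r+x-1}{x}\,{}_2F_1(1,r+x;2+x;q),\qquad x=0,1,2,\dots.$$ Then for every $x=0,1,2,\dots$, $$p(x+1)=p(x)-\frac{p^{r}q^{x}}{x+1}\binom{r+x-1}{r-1},$$ and consequently $p(x+1)<p(x)$ for all $x\ge 0$, i.e. the distribution is strictly decreasing with mode at $0$.
   Context: For real $r>0$ and integer $x\ge0$, $\binom{r+x-1}{x}=\binom{r+x-1}{r-1}=\frac{\Gamma(r+x)}{x!\,\Gamma(r)}$. ${}_2F_1(a,b;c;z)=\sum_{n\ge0}\frac{(a)_n(b)_n}{(c)_n}\frac{z^n}{n!}$ with $(s)_n=s(s+1)\cdots(s+n-1)$, $(s)_0=1$. $\mathcal{UNB}(r,p)$ is the law of $X$ where $N$ is negative binomial with $P(N=n)=\binom{r+n-1}{n}p^rq^n$ and $X\mid N=n$ is uniform on $\{0,\dots,n\}$. *)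

theory Defs
  imports "HOL-Analysis.Analysis"
begin

text \<open>Generalized binomial coefficient for real r > 0 and integer x \<ge> 0:
  binom(r+x-1, x) = binom(r+x-1, r-1) = Gamma(r+x) / (x! Gamma(r)).\<close>
definition nb_binom :: "real \<Rightarrow> nat \<Rightarrow> real" where
  "nb_binom r x = Gamma (r + real x) / (fact x * Gamma r)"

definition hyp2F1 :: "real \<Rightarrow> real \<Rightarrow> real \<Rightarrow> real \<Rightarrow> real" where
  "hyp2F1 a b c z = (\<Sum>n. pochhammer a n * pochhammer b n / pochhammer c n * z ^ n / fact n)"

definition unb_pmf :: "real \<Rightarrow> real \<Rightarrow> nat \<Rightarrow> real" where
  "unb_pmf r p x = (let q = 1 - p in
     q ^ x * p powr r / (1 + real x) * nb_binom r x
       * hyp2F1 1 (r + real x) (2 + real x) q)"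

end

theory Submission
  imports Defs
begin

lemma nb_binom_Suc:
  assumes "r > 0"
  shows "nb_binom r (Suc k) = nb_binom r k * ((r + real k) / (real k + 1))"
proof -
  have "r + real k \<notin> \<int>\<^sub>\<le>\<^sub>0" using assms
    by (metis add_pos_nonneg nonpos_Ints_cases of_int_le_0_iff of_nat_0_le_iff not_le)
  then have g: "Gamma (r + real k + 1) = (r + real k) * Gamma (r + real k)"
    by (rule Gamma_plus1)
  have "Gamma r > 0" using assms by simp
  then show ?thesis unfolding nb_binom_def using g
    by (simp add: field_simps add.assoc)
qed

lemma nb_binom_pos: "r > 0 \<Longrightarrow> nb_binom r k > 0"
  unfolding nb_binom_def by (simp add: add_pos_nonneg)

definition aa :: "real \<Rightarrow> real \<Rightarrow> nat \<Rightarrow> real" where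
  "aa r q k = q ^ k * nb_binom r k / (real k + 1)"

lemma aa_Suc:
  assumes "r > 0"
  shows "aa r q (Suc k) = aa r q k * (q * (r + real k) / (real k + 2))"
  unfolding aa_def nb_binom_Suc[OF assms]
  by (simp add: field_simps)

lemma T_Suc:
  fixes q r :: real
  shows "pochhammer 1 (Suc n) * pochhammer (r + real x) (Suc n) / pochhammer (2 + real x) (Suc n) * q ^ (Suc n) / fact (Suc n)
    = (pochhammer 1 n * pochhammer (r + real x) n / pochhammer (2 + real x) n * q ^ n / fact n)
      * (q * (r + real (x + n)) / (real (x + n) + 2))"
proof -
  have e: "pochhammer 1 m * A / B * q ^ m / fact m = A / B * q ^ m" for m and A B :: real
    by (simp add: pochhammer_fact[symmetric])
  have pp: "pochhammer (2 + real x) n > 0" by (rule pochhammer_pos) simp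
  have d: "2 + real x + real n > 0" by simp
  have "pochhammer (r + real x) (Suc n) / pochhammer (2 + real x) (Suc n) * q ^ (Suc n)
     = pochhammer (r + real x) n / pochhammer (2 + real x) n * q ^ n * (q * (r + real (x + n)) / (real (x + n) + 2))"
    unfolding pochhammer_Suc using pp d by (simp add: field_simps)
  then show ?thesis unfolding e .
qed

lemma term_eq:
  fixes q :: real
  assumes "r > 0"
  shows "q ^ x / (1 + real x) * nb_binom r x *
     (pochhammer 1 n * pochhammer (r + real x) n / pochhammer (2 + real x) n * q ^ n / fact n)
     = aa r q (x + n)"
proof (induction n)
  case 0
  then show ?case by (simp add: aa_def)
next
  case (Suc n)
  have "aa r q (x + Suc n) = aa r q (x + n) * (q * (r + real (x + n)) / (real (x + n) + 2))"
    using aa_Suc[OF assms, of q "x + n"] by simp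
  then show ?case unfolding T_Suc Suc.IH[symmetric] by (simp only: mult.assoc)
qed

lemma aa_summable:
  assumes "r > 0" "0 < q" "q < 1"
  shows "summable (aa r q)"
proof (rule summable_ratio_test[where c = "(1 + q) / 2" and N = "nat (ceiling (2*q*r/(1-q)))"])
  show "(1 + q) / 2 < 1" using assms by simp
  fix n assume n: "nat (ceiling (2*q*r/(1-q))) \<le> n"
  then have "2*q*r/(1-q) \<le> real n"
    by (meson le_nat_iff le_of_int_ceiling of_nat_le_iff order.trans real_nat_ceiling_ge)
  then have h: "2*q*r \<le> real n * (1 - q)" using assms by (simp add: field_simps)
  have pos: "aa r q n > 0" unfolding aa_def using assms nb_binom_pos[OF assms(1)] by simp
  have "q * (r + real n) / (real n + 2) \<le> (1 + q) / 2"
    using h assms by (simp add: field_simps)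
  then have "aa r q n * (q * (r + real n) / (real n + 2)) \<le> aa r q n * ((1 + q) / 2)"
    using pos by (intro mult_left_mono) auto
  moreover have "aa r q (Suc n) > 0" unfolding aa_def using assms nb_binom_pos[OF assms(1)] by simp
  ultimately show "norm (aa r q (Suc n)) \<le> (1 + q) / 2 * norm (aa r q n)"
    using pos aa_Suc[OF assms(1), of q n] by (simp add: mult.commute)
qed

lemma unb_eq:
  assumes "r > 0" "0 < p" "p < 1"
  shows "unb_pmf r p x = p powr r * (\<Sum>n. aa r (1 - p) (x + n))"
proof -
  have s: "summable (\<lambda>n. aa r (1 - p) (n + x))"
    using summable_ignore_initial_segment[OF aa_summable[of r "1 - p"], of x] assms by simp
  have "unb_pmf r p x = p powr r * ((1 - p) ^ x / (1 + real x) * nb_binom r x *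
     hyp2F1 1 (r + real x) (2 + real x) (1 - p))"
    unfolding unb_pmf_def Let_def by (simp add: mult_ac)
  also have "(1 - p) ^ x / (1 + real x) * nb_binom r x * hyp2F1 1 (r + real x) (2 + real x) (1 - p)
     = (\<Sum>n. aa r (1 - p) (x + n))"
  proof -
    define c where "c = (1 - p) ^ x / (1 + real x) * nb_binom r x"
    define T where "T n = pochhammer 1 n * pochhammer (r + real x) n / pochhammer (2 + real x) n * (1 - p) ^ n / fact n" for n
    have cp: "c > 0" unfolding c_def using assms nb_binom_pos[OF assms(1), of x] by simp
    have eq: "c * T n = aa r (1 - p) (x + n)" for n
      unfolding c_def T_def using term_eq[OF assms(1), of "1 - p" x n] by simp
    have "summable (\<lambda>n. c * T n)" using s eq by (simp add: add.commute)
    then have sT: "summable T" using cp summable_cmult_iff[of c T] by simp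
    have "c * hyp2F1 1 (r + real x) (2 + real x) (1 - p) = c * suminf T"
      unfolding hyp2F1_def T_def by simp
    also have "... = (\<Sum>n. c * T n)" using suminf_mult[OF sT, of c] by simp
    also have "... = (\<Sum>n. aa r (1 - p) (x + n))" using eq by simp
    finally show ?thesis unfolding c_def .
  qed
  finally show ?thesis .
qed

theorem mainTheorem2:
  fixes r p :: real
  assumes "r > 0" and "0 < p" and "p < 1"
  shows "(\<forall>x::nat. unb_pmf r p (Suc x) =
            unb_pmf r p x - p powr r * (1 - p) ^ x / (real x + 1) * nb_binom r x)
       \<and> (\<forall>x::nat. unb_pmf r p (Suc x) < unb_pmf r p x)"
proof -
  have A: "unb_pmf r p (Suc x) =
            unb_pmf r p x - p powr r * (1 - p) ^ x / (real x + 1) * nb_binom r x" for x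
  proof -
    have s: "summable (\<lambda>n. aa r (1 - p) (x + n))"
      using aa_summable[of r "1 - p"] assms summable_ignore_initial_segment[of _ x]
      by (simp add: add.commute)
    have "(\<Sum>n. aa r (1 - p) (x + Suc n)) = (\<Sum>n. aa r (1 - p) (x + n)) - aa r (1 - p) x"
      using suminf_split_head[OF s] by simp
    then show ?thesis using unb_eq[OF assms, of x] unb_eq[OF assms, of "Suc x"]
      by (simp add: aa_def right_diff_distrib)
  qed
  have B: "unb_pmf r p (Suc x) < unb_pmf r p x" for x
  proof -
    have "p powr r * (1 - p) ^ x / (real x + 1) * nb_binom r x > 0"
      using assms nb_binom_pos[OF assms(1), of x] by simp
    then show ?thesis using A[of x] by linarith
  qed
  show ?thesis using A B by blast
qed

end
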